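(* Fix $\alpha,\beta\in(0,1)$ and a non-decreasing function $\omega:\mathbb{N}\to\mathbb{N}$ with $\omega(m)\le O(m^{0.5-c})$ for some constant $c>0$. There exist constants $C_{\alpha,\beta}>0$ and $C'_\beta>0$ such that the following holds for the decoupled process with parameters $(\mathcal{P}_\infty,v_0,\mathcal{P}_\infty,\alpha,\beta)$. Let $0\le s<s'\le t-C_{\alpha,\beta}$ and let $k,k'$ be the indices of the rumor frontier at times $s,s'$ respectively. If $s'-s>C'_\beta\,\omega(t-s)\sqrt{t-s}$, then with probability at least $1-4e^{-\omega(t-s)^2}$ all of the following hold: $$|\sigma_k(t)-(s+\beta(t-s))|\le 4\omega(t-s)\sqrt{\beta(t-s)},\qquad |\sigma_{k'}(t)-(s'+\beta(t-s'))|\le 4\omega(t-s)\sqrt{\beta(t-s)},$$ and $\sigma_{k'}(t)-\sigma_k(t)>\omega(t-s)\sqrt{t-s}>0$.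
   Context: Decoupled process on the infinite path $\mathcal{P}_\infty$ with vertices $v_0\to v_1\to\cdots$, root $v_0$, $p(v_i)=v_{i-1}$. Fix $\alpha,\beta\in[0,1]$. Let $Z_0=+1$, $Z_1,Z_2,\dots$ i.i.d. uniform on $\{-1,+1\}$, $Z_\infty=\bot$; counter $\mathrm{count}_0=1$; $\mathrm{origin}_0(v_0)=0$ (and always $0$), $\mathrm{origin}_0(v_i)=\infty$ for $i\ge1$; $g_t(v)=Z_{\mathrm{origin}_t(v)}$. Update from $t$ to $t+1$ (independent choices): if $g_t(v)=g_t(p(v))=\bot$ then $\mathrm{origin}_{t+1}(v)=\infty$; if $g_t(v)=\bot\ne g_t(p(v))$: w.p. $1-\alpha$, $\mathrm{origin}_{t+1}(v)=\mathrm{origin}_t(p(v))$, and w.p. $\alpha$, $\mathrm{origin}_{t+1}(v)$ is the current counter value and the counter is incremented; if $g_t(v)\ne\bot$, $v\neq v_0$: w.p. $\beta$, $\mathrm{origin}_{t+1}(v)=\mathrm{origin}_t(p(v))$, otherwise unchanged. $k$-frontier: $\sigma_k(t)=\max\{i\in\mathbb{N}:\mathrm{origin}_t(v_i)\le k\}$. At time $t$ exactly $v_0,\dots,v_t$ have non-$\bot$ values; the index of the rumor frontier at time $t$ is $\mathrm{origin}_t(v_t)$. *)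

theory Defs
  imports "HOL-Probability.Probability" "HOL-Library.Landau_Symbols" "HOL-Library.Extended_Nat"
begin

text \<open>Decoupled process on the infinite path v_0 -> v_1 -> ..., vertex v_i identified with i,
  parent of i is i - 1.  Origins take values in enat; the value \<infinity> encodes the index
  \<infinity> (with Z_\<infinity> = bottom).  Since Z_i \<noteq> bottom for finite i, g_t(v) = bottom
  iff origin_t(v) = \<infinity>, so the values Z_i do not influence origins or frontiers.

  Randomness: independent coins X(t,v,True) ~ Bernoulli(alpha) (used when v is bottom at time t:
  True = take a fresh counter value) and X(t,v,False) ~ Bernoulli(beta) (used when v is non-bottom:
  True = copy the parent's origin).  Exactly one coin is consulted per (t,v), so the
  choices are independent as required.\<close>

type_synonym dstate = "(nat \<Rightarrow> enat) \<times> nat"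

definition dinit :: dstate where
  "dinit = ((\<lambda>i. if i = 0 then 0 else \<infinity>), 1)"

definition dstep :: "(nat \<times> nat \<times> bool \<Rightarrow> bool) \<Rightarrow> nat \<Rightarrow> dstate \<Rightarrow> dstate" where
  "dstep X t st = (let og = fst st; c = snd st in
     ((\<lambda>v. if v = 0 then 0
           else if og v = \<infinity> then
             (if og (v - 1) = \<infinity> then \<infinity>
              else if X (t, v, True) then enat c else og (v - 1))
           else if X (t, v, False) then og (v - 1) else og v),
      c + card {v. v \<noteq> 0 \<and> og v = \<infinity> \<and> og (v - 1) \<noteq> \<infinity> \<and> X (t, v, True)}))"

fun dproc :: "(nat \<times> nat \<times> bool \<Rightarrow> bool) \<Rightarrow> nat \<Rightarrow> dstate" where
  "dproc X 0 = dinit"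
| "dproc X (Suc t) = dstep X t (dproc X t)"

definition origin :: "(nat \<times> nat \<times> bool \<Rightarrow> bool) \<Rightarrow> nat \<Rightarrow> nat \<Rightarrow> enat" where
  "origin X t v = fst (dproc X t) v"

definition frontier :: "(nat \<times> nat \<times> bool \<Rightarrow> bool) \<Rightarrow> enat \<Rightarrow> nat \<Rightarrow> nat" where
  "frontier X k t = Max {i. origin X t i \<le> k}"

definition rumor_index :: "(nat \<times> nat \<times> bool \<Rightarrow> bool) \<Rightarrow> nat \<Rightarrow> enat" where
  "rumor_index X t = origin X t t"

definition coin_space :: "real \<Rightarrow> real \<Rightarrow> (nat \<times> nat \<times> bool \<Rightarrow> bool) measure" where
  "coin_space \<alpha> \<beta> = (\<Pi>\<^sub>M i\<in>UNIV. measure_pmf (bernoulli_pmf (if snd (snd i) then \<alpha> else \<beta>)))"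

end

theory Submission
  imports Defs
begin


fun wk :: "(nat \<times> nat \<times> bool \<Rightarrow> bool) \<Rightarrow> nat \<Rightarrow> nat \<Rightarrow> nat" where
  "wk X s 0 = s"
| "wk X s (Suc m) = (if wk X s m = s + m
     then (if X (s+m, Suc (s+m), True) then wk X s m else Suc (wk X s m))
     else (if X (s+m, Suc (wk X s m), False) then Suc (wk X s m) else wk X s m))"

lemma wk_le: "wk X s m \<le> s + m"
  by (induction m) auto

abbreviation og where "og X t \<equiv> fst (dproc X t)"
abbreviation cnt where "cnt X t \<equiv> snd (dproc X t)"

lemma og_Suc: "og X (Suc t) v = (if v = 0 then 0
           else if og X t v = \<infinity> then
             (if og X t (v - 1) = \<infinity> then \<infinity>
              else if X (t, v, True) then enat (cnt X t) else og X t (v - 1))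
           else if X (t, v, False) then og X t (v - 1) else og X t v)"
  by (simp add: dstep_def Let_def)

lemma cnt_Suc: "cnt X (Suc t) = cnt X t + card {v. v \<noteq> 0 \<and> og X t v = \<infinity> \<and> og X t (v - 1) \<noteq> \<infinity> \<and> X (t, v, True)}"
  by (simp add: dstep_def Let_def)

lemma og_zero: "og X t 0 = 0"
  by (cases t) (simp_all add: dinit_def dstep_def Let_def)

lemma invs: "(\<forall>v. og X t v = \<infinity> \<longleftrightarrow> v > t) \<and> (\<forall>v. og X t v \<noteq> \<infinity> \<longrightarrow> og X t v < enat (cnt X t))
   \<and> (\<forall>v w. v \<le> w \<longrightarrow> og X t v \<le> og X t w)"
proof (induction t)
  case 0
  have o: "og X 0 v = (if v = 0 then 0 else \<infinity>)" for v by (simp add: dinit_def)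
  have c: "cnt X 0 = 1" by (simp add: dinit_def)
  have e1: "(0::enat) < enat 1" using enat_ord_simps(2)[of 0 1] unfolding enat_0 by simp
  show ?case unfolding o c
  proof (intro conjI allI impI)
    fix v show "((if v = 0 then 0 else \<infinity>) = (\<infinity>::enat)) = (0 < (v::nat))" by (cases "v = 0") simp_all
  next
    fix v assume "(if v = 0 then 0 else \<infinity>) \<noteq> (\<infinity>::enat)"
    then show "(if v = 0 then 0 else \<infinity>) < enat 1" using e1 by (cases "v = 0") simp_all
  next
    fix v w :: nat assume "v \<le> w"
    then show "(if v = 0 then 0 else \<infinity>) \<le> (if w = 0 then 0 else (\<infinity>::enat))" by simp
  qed
next
  case (Suc t)
  have a: "og X t v = \<infinity> \<longleftrightarrow> v > t" for v using Suc by blast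
  have c: "og X t v \<noteq> \<infinity> \<Longrightarrow> og X t v < enat (cnt X t)" for v using Suc by blast
  have m: "v \<le> w \<Longrightarrow> og X t v \<le> og X t w" for v w using Suc by blast
  have S: "{v. v \<noteq> 0 \<and> og X t v = \<infinity> \<and> og X t (v - 1) \<noteq> \<infinity> \<and> X (t, v, True)}
      = (if X (t, Suc t, True) then {Suc t} else {})" (is "?L = ?R")
  proof
    show "?L \<subseteq> ?R"
    proof
      fix v assume "v \<in> ?L"
      then have h: "v \<noteq> 0" "og X t v = \<infinity>" "og X t (v - 1) \<noteq> \<infinity>" "X (t, v, True)" by auto
      have "t < v" using h(2) a[of v] by simp
      moreover have "\<not> t < v - 1" using h(3) a[of "v-1"] by auto
      ultimately have "v = Suc t" by linarith
      then show "v \<in> ?R" using h(4) by simp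
    qed
  next
    show "?R \<subseteq> ?L"
    proof
      fix v assume v: "v \<in> ?R"
      then have "v = Suc t" "X (t, Suc t, True)" by (auto split: if_splits)
      moreover have "og X t (Suc t) = \<infinity>" "og X t t \<noteq> \<infinity>" using a[of "Suc t"] a[of t] by auto
      ultimately show "v \<in> ?L" by simp
    qed
  qed
  have cs: "cnt X (Suc t) = cnt X t + (if X (t, Suc t, True) then 1 else 0)"
    unfolding cnt_Suc S by simp
  have a': "og X (Suc t) v = \<infinity> \<longleftrightarrow> v > Suc t" for v
    using a[of v] a[of "v-1"] unfolding og_Suc by (cases v) auto
  have c': "og X (Suc t) v \<noteq> \<infinity> \<Longrightarrow> og X (Suc t) v < enat (cnt X (Suc t))" for v
  proof -
    assume h: "og X (Suc t) v \<noteq> \<infinity>"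
    have lt: "og X t w \<noteq> \<infinity> \<Longrightarrow> og X t w < enat (cnt X (Suc t))" for w
      using c[of w] cs by (auto simp: less_le_trans)
    have z: "og X t 0 = 0" using og_zero .
    show ?thesis
    proof (cases "v = 0")
      case True
      then have "og X (Suc t) v = og X t 0" using z og_Suc[of X t v] by simp
      then show ?thesis using lt[of 0] z by simp
    next
      case v0: False
      show ?thesis
      proof (cases "og X t v = \<infinity> \<and> og X t (v - 1) \<noteq> \<infinity> \<and> X (t, v, True)")
        case True
        then have "v = Suc t" using a[of v] a[of "v-1"] v0 by auto
        then have "cnt X (Suc t) = Suc (cnt X t)" using cs True by simp
        moreover have "og X (Suc t) v = enat (cnt X t)" using True v0 og_Suc[of X t v] by simp
        ultimately show ?thesis by simp
      next
        case False
        then have "og X (Suc t) v = og X t v \<or> og X (Suc t) v = og X t (v - 1)"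
          using v0 og_Suc[of X t v] h by (auto split: if_splits)
        then show ?thesis using h lt[of v] lt[of "v-1"] by auto
      qed
    qed
  qed
  have A: "v \<le> t \<Longrightarrow> og X (Suc t) v \<le> og X t v" for v
    using a[of v] m[of "v-1" v] unfolding og_Suc by auto
  have B: "v \<le> t \<Longrightarrow> og X t v \<le> og X (Suc t) (Suc v)" for v
  proof -
    assume v: "v \<le> t"
    show ?thesis
    proof (cases "Suc v \<le> t")
      case True
      then show ?thesis using a[of v] a[of "Suc v"] m[of v "Suc v"] unfolding og_Suc by auto
    next
      case False
      then have "v = t" using v by auto
      then show ?thesis using a[of t] a[of "Suc t"] c[of t] unfolding og_Suc by (auto simp: less_imp_le)
    qed
  qed
  have step: "og X (Suc t) v \<le> og X (Suc t) (Suc v)" for v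
  proof (cases "v \<le> t")
    case True
    then show ?thesis using A B order_trans by blast
  next
    case False
    then show ?thesis using a'[of "Suc v"] by auto
  qed
  have m': "v \<le> w \<Longrightarrow> og X (Suc t) v \<le> og X (Suc t) w" for v w
    by (rule lift_Suc_mono_le[of "og X (Suc t)"]) (use step in auto)
  show ?case using a' c' m' by blast
qed



lemma cnt_mono: "t \<le> t' \<Longrightarrow> cnt X t \<le> cnt X t'"
proof (induction t' rule: dec_induct)
  case (step n)
  have "cnt X n \<le> cnt X (Suc n)" by (simp only: cnt_Suc le_add1)
  then show ?case using step by linarith
qed auto

lemma og_A: "v \<le> t \<Longrightarrow> og X (Suc t) v \<le> og X t v"
  using invs[of X t] unfolding og_Suc by auto

lemma og_B: "v \<le> t \<Longrightarrow> og X t v \<le> og X (Suc t) (Suc v)"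
proof -
  assume v: "v \<le> t"
  have a: "og X t v = \<infinity> \<longleftrightarrow> v > t" for v using invs by blast
  have c: "og X t v \<noteq> \<infinity> \<Longrightarrow> og X t v < enat (cnt X t)" for v using invs by blast
  have m: "v \<le> w \<Longrightarrow> og X t v \<le> og X t w" for v w using invs by blast
  show ?thesis
  proof (cases "Suc v \<le> t")
    case True
    then show ?thesis using a[of v] a[of "Suc v"] m[of v "Suc v"] unfolding og_Suc by auto
  next
    case False
    then have "v = t" using v by auto
    then show ?thesis using a[of t] a[of "Suc t"] c[of t] unfolding og_Suc by (auto simp: less_imp_le)
  qed
qed

lemma frontier_set:
  "wk X s m \<le> s + m \<and> (\<forall>i. og X (s+m) i \<le> og X s s \<longleftrightarrow> i \<le> wk X s m)"
proof (induction m)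
  case 0
  have a: "og X s v = \<infinity> \<longleftrightarrow> v > s" for v using invs by blast
  have m: "v \<le> w \<Longrightarrow> og X s v \<le> og X s w" for v w using invs by blast
  show ?case
  proof (simp, intro allI iffI)
    fix i assume "og X s i \<le> og X s s"
    show "i \<le> s"
    proof (rule ccontr)
      assume "\<not> i \<le> s"
      then have "og X s i = \<infinity>" using a[of i] by simp
      moreover have "og X s s \<noteq> \<infinity>" using a[of s] by simp
      ultimately show False using \<open>og X s i \<le> og X s s\<close> by simp
    qed
  next
    fix i assume "i \<le> s" then show "og X s i \<le> og X s s" using m by blast
  qed
next
  case (Suc m)
  define u where "u = s + m"
  define p where "p = wk X s m"
  define k where "k = og X s s"
  have pu: "p \<le> u" using Suc unfolding u_def p_def by auto
  have IH: "og X u i \<le> k \<longleftrightarrow> i \<le> p" for i using Suc unfolding u_def p_def k_def by auto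
  have a: "og X u v = \<infinity> \<longleftrightarrow> v > u" for v using invs by blast
  have kfin: "k \<noteq> \<infinity>" unfolding k_def using invs[of X s] by auto
  have kc: "k < enat (cnt X u)"
  proof -
    have "k < enat (cnt X s)" unfolding k_def using invs[of X s] by auto
    also have "\<dots> \<le> enat (cnt X u)" using cnt_mono[of s u X] unfolding u_def by auto
    finally show ?thesis .
  qed
  have su: "s + Suc m = Suc u" unfolding u_def by simp
  have wS: "wk X s (Suc m) = (if p = u then (if X (u, Suc u, True) then p else Suc p)
      else (if X (u, Suc p, False) then Suc p else p))"
    unfolding p_def u_def by simp
  have low: "i \<le> p \<Longrightarrow> og X (Suc u) i \<le> k" for i
    using og_A[of i u X] IH[of i] pu by auto
  have high: "Suc (Suc p) \<le> i \<Longrightarrow> \<not> og X (Suc u) i \<le> k" for i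
  proof -
    assume i: "Suc (Suc p) \<le> i"
    show ?thesis
    proof (cases "i \<le> Suc u")
      case True
      then have "og X u (i - 1) \<le> og X (Suc u) i" using og_B[of "i-1" u X] i by auto
      moreover have "\<not> og X u (i - 1) \<le> k" using IH[of "i-1"] i by auto
      ultimately show ?thesis by auto
    next
      case False
      then have "og X (Suc u) i = \<infinity>" using invs[of X "Suc u"] by auto
      then show ?thesis using kfin by auto
    qed
  qed
  have mid: "og X (Suc u) (Suc p) \<le> k \<longleftrightarrow> Suc p \<le> wk X s (Suc m)"
  proof (cases "p = u")
    case True
    have "og X u u \<noteq> \<infinity>" using a by auto
    moreover have "og X u u \<le> k" using IH True by auto
    ultimately show ?thesis using True kc a[of "Suc u"] unfolding wS og_Suc by auto
  next
    case False
    then have "Suc p \<le> u" using pu by auto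
    then have "og X u (Suc p) \<noteq> \<infinity>" using a by auto
    moreover have "og X u p \<le> k" "\<not> og X u (Suc p) \<le> k" using IH by auto
    ultimately show ?thesis using False unfolding wS og_Suc by auto
  qed
  have wle: "wk X s (Suc m) \<le> Suc p" "p \<le> wk X s (Suc m)" unfolding wS by auto
  have fin: "og X (Suc u) i \<le> k \<longleftrightarrow> i \<le> wk X s (Suc m)" for i
  proof (cases "i \<le> p")
    case True
    then have "i \<le> wk X s (Suc m)" using wle(2) by linarith
    then show ?thesis using low[OF True] by blast
  next
    case False
    then consider "i = Suc p" | "Suc (Suc p) \<le> i" by linarith
    then show ?thesis
    proof cases
      case 1 then show ?thesis using mid by auto
    next
      case 2 then show ?thesis using high[OF 2] wle by auto
    qed
  qed
  show ?case
  proof (intro conjI allI)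
    show "wk X s (Suc m) \<le> s + Suc m" by (rule wk_le)
    fix i
    show "og X (s + Suc m) i \<le> og X s s \<longleftrightarrow> i \<le> wk X s (Suc m)"
      using fin[of i] unfolding su k_def .
  qed
qed

lemma frontier_wk: "s \<le> t \<Longrightarrow> frontier X (rumor_index X s) t = wk X s (t - s)"
proof -
  assume st: "s \<le> t"
  have "{i. origin X t i \<le> rumor_index X s} = {..wk X s (t-s)}"
    using frontier_set[of X s "t-s"] st unfolding origin_def rumor_index_def by auto
  moreover have "Max {..wk X s (t-s)} = wk X s (t-s)" by (rule Max_eqI) auto
  ultimately show ?thesis unfolding frontier_def by simp
qed


definition nxt :: "nat \<Rightarrow> nat \<Rightarrow> bool \<Rightarrow> nat" where
  "nxt u p c = (if p = u then (if c then p else Suc p) else (if c then Suc p else p))"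
definition jdx :: "nat \<Rightarrow> nat \<Rightarrow> nat \<times> nat \<times> bool" where
  "jdx u p = (u, Suc p, p = u)"

lemma wk_Suc': "wk X s (Suc m) = nxt (s+m) (wk X s m) (X (jdx (s+m) (wk X s m)))"
  by (simp add: nxt_def jdx_def)

lemma nxt_le: "p \<le> u \<Longrightarrow> nxt u p c \<le> Suc u"
  by (auto simp: nxt_def)

lemma wk_local: "(\<forall>j. fst j < s + m \<longrightarrow> X j = Y j) \<Longrightarrow> wk X s m = wk Y s m"
proof (induction m)
  case 0 then show ?case by simp
next
  case (Suc m)
  then have e: "wk X s m = wk Y s m" by auto
  have "X (jdx (s+m) (wk X s m)) = Y (jdx (s+m) (wk X s m))"
    using Suc.prems by (simp add: jdx_def)
  then show ?case unfolding wk_Suc' e by simp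
qed

abbreviation Pm :: "real \<Rightarrow> real \<Rightarrow> nat \<times> nat \<times> bool \<Rightarrow> bool measure" where
  "Pm \<alpha> \<beta> \<equiv> (\<lambda>j. measure_pmf (bernoulli_pmf (if snd (snd j) then \<alpha> else \<beta>)))"

lemma coin_space_eq: "coin_space \<alpha> \<beta> = PiM UNIV (Pm \<alpha> \<beta>)"
  unfolding coin_space_def by simp

lemma comp_meas: "j \<in> I \<Longrightarrow> (\<lambda>X. X j) \<in> measurable (PiM I (Pm \<alpha> \<beta>)) (count_space UNIV)"
  using measurable_component_singleton[of j I "Pm \<alpha> \<beta>"]
  by (subst measurable_cong_sets[OF refl, where N'="Pm \<alpha> \<beta> j"]) auto

lemma wk_meas: "{j. fst j < s + m} \<subseteq> I \<Longrightarrow> (\<lambda>X. wk X s m) \<in> measurable (PiM I (Pm \<alpha> \<beta>)) (count_space UNIV)"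
proof (induction m)
  case 0 then show ?case by simp
next
  case (Suc m)
  have IH: "(\<lambda>X. wk X s m) \<in> measurable (PiM I (Pm \<alpha> \<beta>)) (count_space UNIV)"
  proof -
    have "{j. fst j < s + m} \<subseteq> {j. fst j < s + Suc m}" by auto
    then show ?thesis using Suc by blast
  qed
  have f: "(\<lambda>X. nxt (s+m) p (X (jdx (s+m) p))) \<in> measurable (PiM I (Pm \<alpha> \<beta>)) (count_space UNIV)" for p
  proof -
    have "jdx (s+m) p \<in> I" using Suc.prems by (auto simp: jdx_def)
    then have "(\<lambda>X. X (jdx (s+m) p)) \<in> measurable (PiM I (Pm \<alpha> \<beta>)) (count_space UNIV)"
      by (rule comp_meas)
    moreover have "nxt (s+m) p \<in> measurable (count_space UNIV) (count_space UNIV)" by simp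
    ultimately have "nxt (s+m) p \<circ> (\<lambda>X. X (jdx (s+m) p)) \<in> measurable (PiM I (Pm \<alpha> \<beta>)) (count_space UNIV)"
      by (rule measurable_comp)
    then show ?thesis by (simp add: comp_def)
  qed
  show ?case unfolding wk_Suc'
    by (rule measurable_compose_countable'[where f="\<lambda>p X. nxt (s+m) p (X (jdx (s+m) p))", OF f IH]) auto
qed

context
  fixes \<alpha> \<beta> :: real
  assumes ab: "0 \<le> \<alpha>" "\<alpha> \<le> 1" "0 \<le> \<beta>" "\<beta> \<le> 1"
begin

interpretation P: product_prob_space "Pm \<alpha> \<beta>" UNIV
  by (simp add: product_prob_space_def product_prob_space_axioms_def product_sigma_finite_def
      prob_space_measure_pmf prob_space_imp_sigma_finite)

lemma M_prob: "prob_space (coin_space \<alpha> \<beta>)"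
  unfolding coin_space_eq by (rule P.P.prob_space_axioms)

lemma coords_indep: "P.indep_vars (Pm \<alpha> \<beta>) (\<lambda>j X. X j) UNIV"
proof -
  have rv: "P.random_variable (Pm \<alpha> \<beta> j) (\<lambda>X. X j)" for j
    by (rule measurable_component_singleton) simp
  have "distr (PiM UNIV (Pm \<alpha> \<beta>)) (PiM UNIV (Pm \<alpha> \<beta>)) (\<lambda>x. \<lambda>i\<in>UNIV. x i) = PiM UNIV (Pm \<alpha> \<beta>)"
    by (simp add: restrict_UNIV)
  also have "\<dots> = PiM UNIV (\<lambda>i. distr (PiM UNIV (Pm \<alpha> \<beta>)) (Pm \<alpha> \<beta> i) (\<lambda>x. x i))"
    by (rule PiM_cong) (simp_all add: P.PiM_component)
  finally have eq: "distr (PiM UNIV (Pm \<alpha> \<beta>)) (PiM UNIV (Pm \<alpha> \<beta>)) (\<lambda>x. \<lambda>i\<in>UNIV. x i) =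
     PiM UNIV (\<lambda>i. distr (PiM UNIV (Pm \<alpha> \<beta>)) (Pm \<alpha> \<beta> i) (\<lambda>x. x i))" .
  show ?thesis
    by (rule P.indep_vars_iff_distr_eq_PiM[THEN iffD2, OF _ rv eq]) simp
qed

abbreviation "MM \<equiv> PiM UNIV (Pm \<alpha> \<beta>)"

lemma space_MM: "space MM = UNIV"
  by (simp add: space_PiM)

lemma joint:
  assumes j: "s + m \<le> fst j"
  shows "P.prob {X \<in> space MM. wk X s m = p \<and> X j = c}
       = P.prob {X \<in> space MM. wk X s m = p} * P.prob {X \<in> space MM. X j = c}"
proof -
  define A where "A = {i::nat\<times>nat\<times>bool. fst i < s + m}"
  define B where "B = {j}"
  have AB: "A \<inter> B = {}" using j unfolding A_def B_def by auto
  have ind: "P.indep_var (PiM A (Pm \<alpha> \<beta>)) (\<lambda>\<omega>. restrict (\<lambda>i. \<omega> i) A)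
                        (PiM B (Pm \<alpha> \<beta>)) (\<lambda>\<omega>. restrict (\<lambda>i. \<omega> i) B)"
    by (rule P.indep_var_restrict[OF coords_indep AB]) auto
  define Xa where "Xa = (\<lambda>X. wk X s m) -` {p} \<inter> space (PiM A (Pm \<alpha> \<beta>))"
  define Xb where "Xb = (\<lambda>X. X j) -` {c} \<inter> space (PiM B (Pm \<alpha> \<beta>))"
  have Xa: "Xa \<in> sets (PiM A (Pm \<alpha> \<beta>))"
    unfolding Xa_def by (rule measurable_sets[OF wk_meas]) (auto simp: A_def)
  have Xb: "Xb \<in> sets (PiM B (Pm \<alpha> \<beta>))"
    unfolding Xb_def by (rule measurable_sets[OF comp_meas]) (auto simp: B_def)
  have spA: "restrict X A \<in> space (PiM A (Pm \<alpha> \<beta>))" for X by (simp add: space_PiM)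
  have spB: "restrict X B \<in> space (PiM B (Pm \<alpha> \<beta>))" for X by (simp add: space_PiM)
  have wA: "wk (restrict X A) s m = wk X s m" for X
    by (rule wk_local) (auto simp: A_def)
  have e1: "(\<lambda>x. (restrict (\<lambda>i. x i) A, restrict (\<lambda>i. x i) B)) -` (Xa \<times> Xb) \<inter> space MM
     = {X \<in> space MM. wk X s m = p \<and> X j = c}"
    using spA spB wA unfolding Xa_def Xb_def B_def by auto
  have e2: "(\<lambda>x. restrict (\<lambda>i. x i) A) -` Xa \<inter> space MM = {X \<in> space MM. wk X s m = p}"
    using spA wA unfolding Xa_def by auto
  have e3: "(\<lambda>x. restrict (\<lambda>i. x i) B) -` Xb \<inter> space MM = {X \<in> space MM. X j = c}"
    using spB unfolding Xb_def B_def by auto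
  show ?thesis using P.indep_varD[OF ind Xa Xb] unfolding e1 e2 e3 .
qed

definition "q s m p = P.prob {X \<in> space MM. wk X s m = p}"
definition "cp j c = P.prob {X \<in> space MM. X j = c}"

lemma cp_eq: "cp j c = (if c then (if snd (snd j) then \<alpha> else \<beta>) else 1 - (if snd (snd j) then \<alpha> else \<beta>))"
proof -
  have "cp j c = measure (distr MM (Pm \<alpha> \<beta> j) (\<lambda>X. X j)) {c}"
    unfolding cp_def
    by (subst measure_distr) (auto intro!: arg_cong[where f="P.prob"] simp: measurable_component_singleton)
  also have "\<dots> = measure (Pm \<alpha> \<beta> j) {c}" by (simp add: P.PiM_component)
  also have "\<dots> = pmf (bernoulli_pmf (if snd (snd j) then \<alpha> else \<beta>)) c"
    by (rule measure_pmf_single)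
  finally show ?thesis using ab by (cases c) auto
qed

lemma wk_sets: "{X \<in> space MM. P (wk X s m)} \<in> sets MM"
proof -
  have "{X \<in> space MM. P (wk X s m)} = (\<lambda>X. wk X s m) -` {p. P p} \<inter> space MM" by auto
  also have "\<dots> \<in> sets MM" by (rule measurable_sets[OF wk_meas]) auto
  finally show ?thesis .
qed

lemma wk_sets_eq: "{X \<in> space MM. wk X s m = p} \<in> sets MM"
  using wk_sets[of "\<lambda>x. x = p" s m] by simp

lemma wk_coin_sets: "{X \<in> space MM. wk X s m = p \<and> X j = c} \<in> sets MM"
proof -
  have "{X \<in> space MM. wk X s m = p \<and> X j = c} = {X \<in> space MM. wk X s m = p} \<inter> ((\<lambda>X. X j) -` {c} \<inter> space MM)" by auto
  also have "\<dots> \<in> sets MM"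
    by (intro sets.Int wk_sets measurable_sets[OF comp_meas]) auto
  finally show ?thesis .
qed

lemma q_Suc: "q s (Suc m) p' = (\<Sum>p\<le>s+m. \<Sum>c\<in>UNIV. if nxt (s+m) p c = p' then q s m p * cp (jdx (s+m) p) c else 0)"
proof -
  define u where "u = s + m"
  define S where "S = {x \<in> {..u} \<times> (UNIV::bool set). nxt u (fst x) (snd x) = p'}"
  define E where "E = (\<lambda>x. {X \<in> space MM. wk X s m = fst x \<and> X (jdx u (fst x)) = snd x})"
  have fS: "finite S" unfolding S_def by auto
  have eq: "{X \<in> space MM. wk X s (Suc m) = p'} = (\<Union>x\<in>S. E x)"
  proof (intro set_eqI iffI)
    fix X assume "X \<in> {X \<in> space MM. wk X s (Suc m) = p'}"
    then have "X \<in> E (wk X s m, X (jdx u (wk X s m)))" "(wk X s m, X (jdx u (wk X s m))) \<in> S"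
      unfolding E_def S_def u_def using wk_le[of X s m] by (auto simp del: wk.simps simp: wk_Suc')
    then show "X \<in> (\<Union>x\<in>S. E x)" by blast
  next
    fix X assume "X \<in> (\<Union>x\<in>S. E x)"
    then show "X \<in> {X \<in> space MM. wk X s (Suc m) = p'}"
      unfolding E_def S_def u_def by (auto simp del: wk.simps simp: wk_Suc')
  qed
  have disj: "disjoint_family_on E S"
    unfolding disjoint_family_on_def E_def by auto
  have "q s (Suc m) p' = (\<Sum>x\<in>S. P.prob (E x))"
    unfolding q_def eq
    by (rule P.finite_measure_finite_Union[OF fS _ disj]) (auto simp: E_def wk_coin_sets)
  also have "\<dots> = (\<Sum>x\<in>S. q s m (fst x) * cp (jdx u (fst x)) (snd x))"
    unfolding E_def q_def cp_def by (intro sum.cong refl joint) (simp add: jdx_def u_def)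
  also have "\<dots> = (\<Sum>x\<in>{..u} \<times> (UNIV::bool set). if nxt u (fst x) (snd x) = p' then q s m (fst x) * cp (jdx u (fst x)) (snd x) else 0)"
    unfolding S_def by (rule sum.inter_filter) auto
  also have "\<dots> = (\<Sum>p\<le>u. \<Sum>c\<in>UNIV. if nxt u p c = p' then q s m p * cp (jdx u p) c else 0)"
    by (subst sum.cartesian_product) (simp add: case_prod_beta)
  finally show ?thesis unfolding u_def .
qed

lemma E_Suc: "(\<Sum>p'\<le>s + Suc m. q s (Suc m) p' * g p')
   = (\<Sum>p\<le>s+m. q s m p * (\<Sum>c\<in>UNIV. cp (jdx (s+m) p) c * g (nxt (s+m) p c)))"
proof -
  define u where "u = s + m"
  have "(\<Sum>p'\<le>s + Suc m. q s (Suc m) p' * g p')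
     = (\<Sum>p'\<le>Suc u. \<Sum>p\<le>u. \<Sum>c\<in>UNIV. if nxt u p c = p' then q s m p * cp (jdx u p) c * g p' else 0)"
    unfolding q_Suc u_def sum_distrib_right by (intro sum.cong refl) auto
  also have "\<dots> = (\<Sum>p\<le>u. \<Sum>c\<in>UNIV. \<Sum>p'\<le>Suc u. if nxt u p c = p' then q s m p * cp (jdx u p) c * g p' else 0)"
    by (subst sum.swap) (subst sum.swap, rule refl)
  also have "\<dots> = (\<Sum>p\<le>u. \<Sum>c\<in>UNIV. q s m p * cp (jdx u p) c * g (nxt u p c))"
  proof (intro sum.cong refl)
    fix p c assume "p \<in> {..u}"
    then have "nxt u p c \<in> {..Suc u}" using nxt_le[of p u c] by auto
    then show "(\<Sum>p'\<le>Suc u. if nxt u p c = p' then q s m p * cp (jdx u p) c * g p' else 0)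
      = q s m p * cp (jdx u p) c * g (nxt u p c)"
      by (subst sum.delta') auto
  qed
  also have "\<dots> = (\<Sum>p\<le>u. q s m p * (\<Sum>c\<in>UNIV. cp (jdx u p) c * g (nxt u p c)))"
    by (simp add: sum_distrib_left mult.assoc)
  finally show ?thesis unfolding u_def .
qed

lemma prob_wk_in: "P.prob {X \<in> space MM. wk X s n \<in> B} = (\<Sum>p\<in>{..s+n} \<inter> B. q s n p)"
proof -
  have eq: "{X \<in> space MM. wk X s n \<in> B} = (\<Union>p\<in>{..s+n} \<inter> B. {X \<in> space MM. wk X s n = p})"
    using wk_le by auto
  show ?thesis unfolding eq q_def
    by (rule P.finite_measure_finite_Union) (auto simp: disjoint_family_on_def wk_sets_eq)
qed

end


context
  fixes \<alpha> \<beta> :: real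
  assumes ab: "0 \<le> \<alpha>" "\<alpha> \<le> 1" "0 \<le> \<beta>" "\<beta> \<le> 1"
begin

interpretation P: product_prob_space "Pm \<alpha> \<beta>" UNIV
  by (simp add: product_prob_space_def product_prob_space_axioms_def product_sigma_finite_def
      prob_space_measure_pmf prob_space_imp_sigma_finite)

lemma q_nonneg: "0 \<le> q \<alpha> \<beta> s n p"
  unfolding q_def[OF ab] by simp

lemma q_0: "q \<alpha> \<beta> s 0 p = (if p = s then 1 else 0)"
proof -
  have "{X \<in> space (PiM UNIV (Pm \<alpha> \<beta>)). wk X s 0 = p} = (if p = s then space (PiM UNIV (Pm \<alpha> \<beta>)) else {})"
    by auto
  moreover have "measure (PiM UNIV (Pm \<alpha> \<beta>)) (space (PiM UNIV (Pm \<alpha> \<beta>))) = 1"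
    using prob_space.prob_space[OF M_prob[OF ab]] unfolding coin_space_eq .
  ultimately show ?thesis unfolding q_def[OF ab] by simp
qed

lemma mgf_bound:
  fixes l H :: real
  assumes H: "0 < H" "\<alpha> + (1-\<alpha>) * exp l * H \<le> (1 - \<beta> + \<beta> * exp l) * H"
  shows "(\<Sum>p\<le>s+n. q \<alpha> \<beta> s n p * (exp (l * (real p - real s)) * (if p = s+n then H else 1)))
         \<le> (1 - \<beta> + \<beta> * exp l)^n * H"
proof (induction n)
  case 0
  have "(\<Sum>p\<le>s+0. q \<alpha> \<beta> s 0 p * (exp (l * (real p - real s)) * (if p = s+0 then H else 1)))
     = (\<Sum>p\<le>s. (if p = s then H else 0))"
    unfolding q_0 by (intro sum.cong refl) auto
  also have "\<dots> = H" by simp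
  finally show ?case by simp
next
  case (Suc n)
  define u where "u = s + n"
  define \<Phi> where "\<Phi> = 1 - \<beta> + \<beta> * exp l"
  define g where "g = (\<lambda>p'::nat. exp (l * (real p' - real s)) * (if p' = s + Suc n then H else 1))"
  define v where "v = (\<lambda>p::nat. exp (l * (real p - real s)) * (if p = s+n then H else 1))"
  have E': "\<And>x y. exp (l * (1 + x - y)) = exp (l * (x - y)) * exp l"
  proof -
    fix x y :: real
    have "l * (1 + x - y) = l * (x - y) + l" by (simp add: algebra_simps)
    then show "exp (l * (1 + x - y)) = exp (l * (x - y)) * exp l" by (simp add: exp_add)
  qed
  have E: "\<And>x. exp (l * (1 + x)) = exp (l * x) * exp l" by (simp add: distrib_left exp_add mult.commute)
  have inner: "(\<Sum>c\<in>UNIV. cp \<alpha> \<beta> (jdx u p) c * g (nxt u p c)) \<le> \<Phi> * v p" if p: "p \<le> u" for p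
  proof (cases "p = u")
    case True
    have "(\<Sum>c\<in>UNIV. cp \<alpha> \<beta> (jdx u p) c * g (nxt u p c))
        = \<alpha> * exp (l * (real u - real s)) + (1 - \<alpha>) * (exp (l * (real u - real s)) * exp l * H)"
    proof -
      have e: "exp (l * (real (Suc u) - real s)) = exp (l * (real u - real s)) * exp l"
        by (simp add: algebra_simps exp_add[symmetric])
      show ?thesis
        using True unfolding UNIV_bool g_def u_def
        by (simp add: cp_eq[OF ab] jdx_def nxt_def E)
    qed
    also have "\<dots> = exp (l * (real u - real s)) * (\<alpha> + (1-\<alpha>) * exp l * H)"
      by (simp add: algebra_simps)
    also have "\<dots> \<le> exp (l * (real u - real s)) * (\<Phi> * H)"
      using H unfolding \<Phi>_def by (intro mult_left_mono) auto
    also have "\<dots> = \<Phi> * v p" unfolding v_def True u_def by simp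
    finally show ?thesis .
  next
    case False
    have e: "exp (l * (real (Suc p) - real s)) = exp (l * (real p - real s)) * exp l"
      by (simp add: algebra_simps exp_add[symmetric])
    have "(\<Sum>c\<in>UNIV. cp \<alpha> \<beta> (jdx u p) c * g (nxt u p c))
        = \<beta> * (exp (l * (real p - real s)) * exp l) + (1 - \<beta>) * exp (l * (real p - real s))"
      using False p unfolding UNIV_bool g_def u_def
      by (simp add: cp_eq[OF ab] jdx_def nxt_def E')
    also have "\<dots> = \<Phi> * v p" using False unfolding v_def \<Phi>_def u_def by (simp add: algebra_simps)
    finally show ?thesis by simp
  qed
  have "(\<Sum>p\<le>s + Suc n. q \<alpha> \<beta> s (Suc n) p * g p)
      = (\<Sum>p\<le>s+n. q \<alpha> \<beta> s n p * (\<Sum>c\<in>UNIV. cp \<alpha> \<beta> (jdx (s+n) p) c * g (nxt (s+n) p c)))"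
    by (rule E_Suc[OF ab])
  also have "\<dots> \<le> (\<Sum>p\<le>s+n. q \<alpha> \<beta> s n p * (\<Phi> * v p))"
    by (intro sum_mono mult_left_mono inner[unfolded u_def] q_nonneg) auto
  also have "\<dots> = \<Phi> * (\<Sum>p\<le>s+n. q \<alpha> \<beta> s n p * v p)"
    by (simp add: sum_distrib_left algebra_simps)
  also have "\<dots> \<le> \<Phi> * (\<Phi>^n * H)"
  proof (rule mult_left_mono)
    show "(\<Sum>p\<le>s+n. q \<alpha> \<beta> s n p * v p) \<le> \<Phi>^n * H" using Suc unfolding v_def \<Phi>_def .
    show "0 \<le> \<Phi>" unfolding \<Phi>_def using ab by (smt (verit) exp_gt_zero mult_nonneg_nonneg)
  qed
  finally show ?case unfolding g_def \<Phi>_def by simp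
qed

lemma tail_bound:
  fixes l H a :: real
  assumes H: "1 \<le> H" "\<alpha> + (1-\<alpha>) * exp l * H \<le> (1 - \<beta> + \<beta> * exp l) * H"
    and B: "\<And>p. p \<in> B \<Longrightarrow> a \<le> l * (real p - real s)"
  shows "P.prob {X \<in> space (PiM UNIV (Pm \<alpha> \<beta>)). wk X s n \<in> B} \<le> (1 - \<beta> + \<beta> * exp l)^n * H * exp (- a)"
proof -
  define v where "v = (\<lambda>p::nat. exp (l * (real p - real s)) * (if p = s+n then H else 1))"
  have vge: "exp a \<le> v p" if "p \<in> B" for p
  proof -
    have "exp a \<le> exp (l * (real p - real s))" using B[OF that] by simp
    also have "\<dots> \<le> v p"
    proof -
      have "exp (l * (real p - real s)) * 1 \<le> exp (l * (real p - real s)) * H"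
        using H(1) by (intro mult_left_mono) auto
      then show ?thesis unfolding v_def by auto
    qed
    finally show ?thesis .
  qed
  have "P.prob {X \<in> space (PiM UNIV (Pm \<alpha> \<beta>)). wk X s n \<in> B} = (\<Sum>p\<in>{..s+n} \<inter> B. q \<alpha> \<beta> s n p)"
    by (rule prob_wk_in[OF ab])
  also have "\<dots> \<le> (\<Sum>p\<in>{..s+n} \<inter> B. q \<alpha> \<beta> s n p * (v p * exp (-a)))"
  proof (intro sum_mono)
    fix p assume "p \<in> {..s+n} \<inter> B"
    then have "1 \<le> v p * exp (-a)" using vge[of p] by (simp add: exp_minus field_simps)
    then show "q \<alpha> \<beta> s n p \<le> q \<alpha> \<beta> s n p * (v p * exp (-a))"
      using q_nonneg[of s n p] by (metis mult_left_mono mult.right_neutral)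
  qed
  also have "\<dots> \<le> (\<Sum>p\<in>{..s+n}. q \<alpha> \<beta> s n p * (v p * exp (-a)))"
    by (rule sum_mono2) (use H(1) in \<open>auto intro!: mult_nonneg_nonneg q_nonneg simp: v_def\<close>)
  also have "\<dots> = (\<Sum>p\<le>s+n. q \<alpha> \<beta> s n p * v p) * exp (-a)"
    by (simp add: sum_distrib_right mult.assoc)
  also have "\<dots> \<le> (1 - \<beta> + \<beta> * exp l)^n * H * exp (-a)"
  proof (rule mult_right_mono)
    show "(\<Sum>p\<le>s+n. q \<alpha> \<beta> s n p * v p) \<le> (1 - \<beta> + \<beta> * exp l)^n * H"
      unfolding v_def by (rule mgf_bound) (use H in auto)
  qed simp
  finally show ?thesis .
qed

end


lemma exp_neg_bound: "0 \<le> (l::real) \<Longrightarrow> exp (- l) \<le> 1 - l + l^2"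
proof -
  assume l: "0 \<le> l"
  have e: "1 + l + l^2/2 \<le> exp l" using exp_lower_Taylor_quadratic[OF l] .
  have "1 \<le> (1 - l + l^2) * (1 + l + l^2/2)"
  proof -
    define y where "y = l^2/2"
    have r: "(1 - l + l^2) * (1 + l + y) = 1 + y + (l^3 - l*y) + l^2*y"
      by (simp add: algebra_simps power2_eq_square power3_eq_cube)
    have "l * y = l^3 / 2" unfolding y_def by (simp add: power2_eq_square power3_eq_cube)
    moreover have "0 \<le> l^3" using l by simp
    ultimately have "0 \<le> l^3 - l*y" by linarith
    moreover have "0 \<le> y" unfolding y_def by simp
    moreover have "0 \<le> l^2*y" unfolding y_def by simp
    ultimately show ?thesis using r unfolding y_def by linarith
  qed
  also have "\<dots> \<le> (1 - l + l^2) * exp l"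
  proof (rule mult_left_mono[OF e])
    show "0 \<le> 1 - l + l^2"
  proof (cases "l \<le> 1")
    case True then show ?thesis by (simp add: add_nonneg_nonneg)
  next
    case False
    then have "l * 1 \<le> l * l" using l by (intro mult_left_mono) auto
    then show ?thesis by (simp add: power2_eq_square)
  qed
  qed
  finally have "1 \<le> (1 - l + l^2) * exp l" .
  then have "exp (-l) * 1 \<le> exp (-l) * ((1 - l + l^2) * exp l)" by (intro mult_left_mono) auto
  also have "\<dots> = (1 - l + l^2) * (exp (-l) * exp l)" by (simp only: mult.commute mult.left_commute)
  also have "exp (-l) * exp l = 1" by (simp add: exp_add[symmetric])
  finally show ?thesis by simp
qed

context
  fixes \<alpha> \<beta> :: real
  assumes ab: "0 \<le> \<alpha>" "\<alpha> \<le> 1" "0 \<le> \<beta>" "\<beta> \<le> 1"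
begin

interpretation P: product_prob_space "Pm \<alpha> \<beta>" UNIV
  by (simp add: product_prob_space_def product_prob_space_axioms_def product_sigma_finite_def
      prob_space_measure_pmf prob_space_imp_sigma_finite)

lemma Phi_pow: "(1 - \<beta> + \<beta> * exp l)^n \<le> exp (real n * \<beta> * (exp l - 1))"
proof -
  have p1: "0 \<le> 1 - \<beta> + \<beta> * exp l" using ab by (smt (verit) exp_gt_zero mult_nonneg_nonneg)
  have p2: "1 - \<beta> + \<beta> * exp l \<le> exp (\<beta> * (exp l - 1))"
  proof -
    have "1 - \<beta> + \<beta> * exp l = 1 + \<beta> * (exp l - 1)" by (simp add: algebra_simps)
    also have "\<dots> \<le> exp (\<beta> * (exp l - 1))" by (rule exp_ge_add_one_self)
    finally show ?thesis .
  qed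
  have "(1 - \<beta> + \<beta> * exp l)^n \<le> (exp (\<beta> * (exp l - 1)))^n" by (rule power_mono[OF p2 p1])
  also have "\<dots> = exp (real n * (\<beta> * (exp l - 1)))" by (rule exp_of_nat_mult[symmetric])
  also have "\<dots> = exp (real n * \<beta> * (exp l - 1))" by (simp only: mult.assoc)
  finally show ?thesis .
qed

lemma upper_tail:
  assumes a1: "\<alpha> < 1" and l: "0 < l" "l \<le> 1" "exp l \<le> (2 - \<alpha>) / (2 - 2 * \<alpha>)"
  shows "P.prob {X \<in> space (PiM UNIV (Pm \<alpha> \<beta>)). wk X s n \<in> {p. \<beta> * real n + x \<le> real p - real s}}
     \<le> 3 * exp (real n * \<beta> * l^2 - l * x)"
proof -
  have el: "1 \<le> exp l" using l by simp
  have "(2 - 2 * \<alpha>) * exp l \<le> 2 - \<alpha>" using l(3) a1 by (simp add: field_simps)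
  then have "\<alpha> + (1-\<alpha>) * exp l * 2 \<le> 2" by (simp add: algebra_simps)
  also have "2 \<le> (1 - \<beta> + \<beta> * exp l) * 2"
  proof -
    have "0 \<le> \<beta> * (exp l - 1)" using ab el by simp
    then show ?thesis by (simp add: algebra_simps)
  qed
  finally have Hc: "\<alpha> + (1-\<alpha>) * exp l * 2 \<le> (1 - \<beta> + \<beta> * exp l) * 2" .
  have "P.prob {X \<in> space (PiM UNIV (Pm \<alpha> \<beta>)). wk X s n \<in> {p. \<beta> * real n + x \<le> real p - real s}}
     \<le> (1 - \<beta> + \<beta> * exp l)^n * 2 * exp (- (l * (\<beta> * real n + x)))"
  proof (rule tail_bound[OF ab _ Hc])
    fix p assume "p \<in> {p. \<beta> * real n + x \<le> real p - real s}"
    then show "l * (\<beta> * real n + x) \<le> l * (real p - real s)"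
      using l by (intro mult_left_mono) auto
  qed simp
  also have "\<dots> \<le> exp (real n * \<beta> * (exp l - 1)) * 2 * exp (- (l * (\<beta> * real n + x)))"
    by (intro mult_right_mono Phi_pow) auto
  also have "\<dots> \<le> exp (real n * \<beta> * (l + l^2)) * 2 * exp (- (l * (\<beta> * real n + x)))"
  proof -
    have "exp l - 1 \<le> l + l^2" using exp_bound[of l] l by simp
    then have "real n * \<beta> * (exp l - 1) \<le> real n * \<beta> * (l + l^2)"
      using ab by (intro mult_left_mono) auto
    then show ?thesis by (intro mult_right_mono) auto
  qed
  also have "\<dots> = 2 * exp (real n * \<beta> * l^2 - l * x)"
  proof -
    have "real n * \<beta> * (l + l^2) + (- (l * (\<beta> * real n + x))) = real n * \<beta> * l^2 - l * x"
      by (simp add: algebra_simps)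
    moreover have "exp (real n * \<beta> * (l + l^2)) * 2 * exp (- (l * (\<beta> * real n + x)))
       = 2 * exp (real n * \<beta> * (l + l^2) + (- (l * (\<beta> * real n + x))))"
      by (simp only: exp_add mult.commute mult.left_commute)
    ultimately show ?thesis by simp
  qed
  also have "\<dots> \<le> 3 * exp (real n * \<beta> * l^2 - l * x)" by simp
  finally show ?thesis .
qed

lemma lower_tail:
  assumes l: "0 < l" "l \<le> 1"
  shows "P.prob {X \<in> space (PiM UNIV (Pm \<alpha> \<beta>)). wk X s n \<in> {p. real p - real s \<le> \<beta> * real n - x}}
     \<le> 3 * exp (real n * \<beta> * l^2 - l * x)"
proof -
  have el: "1 \<le> exp l" using l by simp
  have Hc: "\<alpha> + (1-\<alpha>) * exp (-l) * exp l \<le> (1 - \<beta> + \<beta> * exp (-l)) * exp l"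
  proof -
    have e1: "exp (-l) * exp l = 1" by (simp add: exp_add[symmetric])
    have "\<alpha> + (1-\<alpha>) * exp (-l) * exp l = \<alpha> + (1-\<alpha>) * (exp (-l) * exp l)" by (simp add: mult.assoc)
    also have "\<dots> = 1" unfolding e1 by simp
    finally have "\<alpha> + (1-\<alpha>) * exp (-l) * exp l = 1" .
    also have "1 \<le> (1 - \<beta>) * exp l + \<beta>"
    proof -
      have "0 \<le> (1 - \<beta>) * (exp l - 1)" using ab el by simp
      then show ?thesis by (simp add: algebra_simps)
    qed
    also have "\<dots> = (1 - \<beta> + \<beta> * exp (-l)) * exp l" by (simp add: algebra_simps exp_minus)
    finally show ?thesis .
  qed
  have "P.prob {X \<in> space (PiM UNIV (Pm \<alpha> \<beta>)). wk X s n \<in> {p. real p - real s \<le> \<beta> * real n - x}}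
     \<le> (1 - \<beta> + \<beta> * exp (-l))^n * exp l * exp (- (- l * (\<beta> * real n - x)))"
  proof (rule tail_bound[OF ab _ Hc])
    fix p assume "p \<in> {p. real p - real s \<le> \<beta> * real n - x}"
    then have "l * (real p - real s) \<le> l * (\<beta> * real n - x)"
      using l by (intro mult_left_mono) auto
    then show "- l * (\<beta> * real n - x) \<le> - l * (real p - real s)" by simp
  qed (use el in simp)
  also have "\<dots> \<le> exp (real n * \<beta> * (exp (-l) - 1)) * exp l * exp (- (- l * (\<beta> * real n - x)))"
    by (intro mult_right_mono Phi_pow) auto
  also have "\<dots> \<le> exp (real n * \<beta> * (- l + l^2)) * exp l * exp (- (- l * (\<beta> * real n - x)))"
  proof -
    have "exp (-l) - 1 \<le> - l + l^2" using exp_neg_bound[of l] l by simp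
    then have "real n * \<beta> * (exp (-l) - 1) \<le> real n * \<beta> * (- l + l^2)"
      using ab by (intro mult_left_mono) auto
    then show ?thesis by (intro mult_right_mono) auto
  qed
  also have "\<dots> = exp l * exp (real n * \<beta> * l^2 - l * x)"
  proof -
    have "real n * \<beta> * (- l + l^2) + l + (- (- l * (\<beta> * real n - x))) = l + (real n * \<beta> * l^2 - l * x)"
      by (simp add: algebra_simps)
    moreover have "exp (real n * \<beta> * (- l + l^2)) * exp l * exp (- (- l * (\<beta> * real n - x)))
       = exp (real n * \<beta> * (- l + l^2) + l + (- (- l * (\<beta> * real n - x))))"
      by (simp only: exp_add)
    ultimately have "exp (real n * \<beta> * (- l + l^2)) * exp l * exp (- (- l * (\<beta> * real n - x)))
       = exp (l + (real n * \<beta> * l^2 - l * x))" by (simp only:)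
    then show ?thesis by (simp only: exp_add)
  qed
  also have "\<dots> \<le> 3 * exp (real n * \<beta> * l^2 - l * x)"
  proof (rule mult_right_mono)
    have "exp l \<le> exp 1" using l by simp
    also have "\<dots> \<le> 3" using exp_le by simp
    finally show "exp l \<le> 3" .
  qed simp
  finally show ?thesis .
qed

end


context
  fixes \<alpha> \<beta> :: real
  assumes ab: "0 \<le> \<alpha>" "\<alpha> \<le> 1" "0 \<le> \<beta>" "\<beta> \<le> 1"
begin

interpretation P: product_prob_space "Pm \<alpha> \<beta>" UNIV
  by (simp add: product_prob_space_def product_prob_space_axioms_def product_sigma_finite_def
      prob_space_measure_pmf prob_space_imp_sigma_finite)

lemma wk2_sets: "{X \<in> space (PiM UNIV (Pm \<alpha> \<beta>)). Q (wk X s m) (wk X s' m')} \<in> sets (PiM UNIV (Pm \<alpha> \<beta>))"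
proof -
  have "{X \<in> space (PiM UNIV (Pm \<alpha> \<beta>)). Q (wk X s m) (wk X s' m')}
     = (\<Union>a\<in>{..s+m}. {X \<in> space (PiM UNIV (Pm \<alpha> \<beta>)). wk X s m = a} \<inter> {X \<in> space (PiM UNIV (Pm \<alpha> \<beta>)). Q a (wk X s' m')})"
    using wk_le by blast
  also have "\<dots> \<in> sets (PiM UNIV (Pm \<alpha> \<beta>))"
    by (intro sets.finite_UN sets.Int wk_sets_eq[OF ab] wk_sets[OF ab]) auto
  finally show ?thesis .
qed

lemma exponent_bound:
  assumes w: "0 \<le> w" and N: "0 < N" and b: "0 < \<beta>" and n: "n \<le> N"
  shows "n * \<beta> * (2 * w / sqrt (\<beta> * N))^2 - (2 * w / sqrt (\<beta> * N)) * (4 * w * sqrt (\<beta> * N)) \<le> - 4 * w^2"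
proof -
  define r where "r = sqrt (\<beta> * N)"
  have r: "0 < r" "r^2 = \<beta> * N" unfolding r_def using b N by auto
  have "(2 * w / r)^2 = (2 * w)^2 / r^2" by (simp add: power_divide)
  also have "\<dots> = 4 * w^2 / (\<beta> * N)" using r(2) by (simp add: power_mult_distrib)
  finally have sq: "(2 * w / r)^2 = 4 * w^2 / (\<beta> * N)" .
  have "n * \<beta> * (4 * w^2 / (\<beta> * N)) = 4 * w^2 * (n / N)" using b N by (simp add: field_simps)
  then have "n * \<beta> * (2 * w / r)^2 = 4 * w^2 * (n / N)" unfolding sq .
  also have "\<dots> \<le> 4 * w^2 * 1" using n N by (intro mult_left_mono) auto
  finally have A: "n * \<beta> * (2 * w / r)^2 \<le> 4 * w^2" by simp
  have B: "(2 * w / r) * (4 * w * r) = 8 * w^2" using r by (simp add: power2_eq_square field_simps)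
  show ?thesis using A B unfolding r_def[symmetric] by linarith
qed

lemma key:
  assumes a1: "\<alpha> < 1" and b: "0 < \<beta>"
    and ss: "s < s'" "s' \<le> t"
    and w: "1 \<le> w"
    and d: "10 * w * sqrt (real (t - s)) < (1 - \<beta>) * real (s' - s)"
    and l1: "2 * w / sqrt (\<beta> * real (t-s)) \<le> 1"
    and l2: "exp (2 * w / sqrt (\<beta> * real (t-s))) \<le> (2 - \<alpha>) / (2 - 2 * \<alpha>)"
  shows "1 - 4 * exp (- (w^2)) \<le> P.prob {X \<in> space (PiM UNIV (Pm \<alpha> \<beta>)).
     \<bar>real (wk X s (t-s)) - (real s + \<beta> * real (t-s))\<bar> \<le> 4 * w * sqrt (\<beta> * real (t-s)) \<and>
     \<bar>real (wk X s' (t-s')) - (real s' + \<beta> * real (t-s'))\<bar> \<le> 4 * w * sqrt (\<beta> * real (t-s)) \<and>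
     real (wk X s' (t-s')) - real (wk X s (t-s)) > w * sqrt (real (t-s)) \<and>
     w * sqrt (real (t-s)) > 0}"
proof -
  define N where "N = t - s"
  define n2 where "n2 = t - s'"
  define x where "x = 4 * w * sqrt (\<beta> * real N)"
  define l where "l = 2 * w / sqrt (\<beta> * real N)"
  define Sp where "Sp = space (PiM UNIV (Pm \<alpha> \<beta>))"
  have N0: "0 < real N" unfolding N_def using ss by auto
  have n2N: "real n2 \<le> real N" unfolding N_def n2_def using ss by auto
  have Nn2: "real N - real n2 = real s' - real s" unfolding N_def n2_def using ss by auto
  have lpos: "0 < l" unfolding l_def using w N0 b by auto
  have l1': "l \<le> 1" and l2': "exp l \<le> (2 - \<alpha>) / (2 - 2 * \<alpha>)" using l1 l2 unfolding l_def N_def by auto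
  have eb1: "real N * \<beta> * l^2 - l * x \<le> - 4 * w^2"
    unfolding l_def x_def by (rule exponent_bound) (use w N0 b in auto)
  have eb2: "real n2 * \<beta> * l^2 - l * x \<le> - 4 * w^2"
    unfolding l_def x_def by (rule exponent_bound) (use w N0 b n2N in auto)
  define B1 where "B1 = {X \<in> Sp. wk X s N \<in> {p. \<beta> * real N + x \<le> real p - real s}}"
  define B2 where "B2 = {X \<in> Sp. wk X s N \<in> {p. real p - real s \<le> \<beta> * real N - x}}"
  define B3 where "B3 = {X \<in> Sp. wk X s' n2 \<in> {p. \<beta> * real n2 + x \<le> real p - real s'}}"
  define B4 where "B4 = {X \<in> Sp. wk X s' n2 \<in> {p. real p - real s' \<le> \<beta> * real n2 - x}}"
  define E where "E = 3 * exp (- 4 * w^2)"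
  have p1: "P.prob B1 \<le> E"
  proof -
    have "P.prob B1 \<le> 3 * exp (real N * \<beta> * l^2 - l * x)"
      unfolding B1_def Sp_def by (rule upper_tail[OF ab a1 lpos l1' l2'])
    also have "\<dots> \<le> E" unfolding E_def using eb1 by simp
    finally show ?thesis .
  qed
  have p2: "P.prob B2 \<le> E"
  proof -
    have "P.prob B2 \<le> 3 * exp (real N * \<beta> * l^2 - l * x)"
      unfolding B2_def Sp_def by (rule lower_tail[OF ab lpos l1'])
    also have "\<dots> \<le> E" unfolding E_def using eb1 by simp
    finally show ?thesis .
  qed
  have p3: "P.prob B3 \<le> E"
  proof -
    have "P.prob B3 \<le> 3 * exp (real n2 * \<beta> * l^2 - l * x)"
      unfolding B3_def Sp_def by (rule upper_tail[OF ab a1 lpos l1' l2'])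
    also have "\<dots> \<le> E" unfolding E_def using eb2 by simp
    finally show ?thesis .
  qed
  have p4: "P.prob B4 \<le> E"
  proof -
    have "P.prob B4 \<le> 3 * exp (real n2 * \<beta> * l^2 - l * x)"
      unfolding B4_def Sp_def by (rule lower_tail[OF ab lpos l1'])
    also have "\<dots> \<le> E" unfolding E_def using eb2 by simp
    finally show ?thesis .
  qed
  have sB1: "B1 \<in> P.events" unfolding B1_def Sp_def by (rule wk_sets[OF ab])
  have sB2: "B2 \<in> P.events" unfolding B2_def Sp_def by (rule wk_sets[OF ab])
  have sB3: "B3 \<in> P.events" unfolding B3_def Sp_def by (rule wk_sets[OF ab])
  have sB4: "B4 \<in> P.events" unfolding B4_def Sp_def by (rule wk_sets[OF ab])
  note sB = sB1 sB2 sB3 sB4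
  define U where "U = B1 \<union> B2 \<union> B3 \<union> B4"
  have sU: "U \<in> P.events" unfolding U_def using sB by auto
  have pU: "P.prob U \<le> 4 * E"
  proof -
    have "P.prob U \<le> P.prob (B1 \<union> B2 \<union> B3) + P.prob B4"
      unfolding U_def by (rule measure_subadditive) (use sB in auto)
    also have "P.prob (B1 \<union> B2 \<union> B3) \<le> P.prob (B1 \<union> B2) + P.prob B3"
      by (rule measure_subadditive) (use sB in auto)
    also have "P.prob (B1 \<union> B2) \<le> P.prob B1 + P.prob B2"
      by (rule measure_subadditive) (use sB in auto)
    finally show ?thesis using p1 p2 p3 p4 by linarith
  qed
  have E4: "4 * E \<le> 4 * exp (- (w^2))"
  proof -
    have "3 \<le> exp (3 * w^2)"
    proof -
      have "1 \<le> w^2" using w by (simp add: one_le_power)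
      then have "3 \<le> 1 + 3 * w^2" by simp
      also have "\<dots> \<le> exp (3 * w^2)" by (rule exp_ge_add_one_self)
      finally show ?thesis .
    qed
    then have "3 * exp (- 4 * w^2) \<le> exp (3 * w^2) * exp (- 4 * w^2)" by (intro mult_right_mono) auto
    also have "\<dots> = exp (- (w^2))" by (simp add: exp_add[symmetric])
    finally show ?thesis unfolding E_def by simp
  qed
  define G where "G = {X \<in> Sp.
     \<bar>real (wk X s (t-s)) - (real s + \<beta> * real (t-s))\<bar> \<le> 4 * w * sqrt (\<beta> * real (t-s)) \<and>
     \<bar>real (wk X s' (t-s')) - (real s' + \<beta> * real (t-s'))\<bar> \<le> 4 * w * sqrt (\<beta> * real (t-s)) \<and>
     real (wk X s' (t-s')) - real (wk X s (t-s)) > w * sqrt (real (t-s)) \<and>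
     w * sqrt (real (t-s)) > 0}"
  have sG: "G \<in> P.events" unfolding G_def Sp_def by (rule wk2_sets)
  have sqb: "sqrt (\<beta> * real N) \<le> sqrt (real N)" using ab N0 by (intro real_sqrt_le_mono) (simp add: mult_le_cancel_right1)
  have wpos: "0 < w * sqrt (real N)" using w N0 by simp
  have sub: "Sp - U \<subseteq> G"
  proof
    fix X assume X: "X \<in> Sp - U"
    define a where "a = real (wk X s N)"
    define bb where "bb = real (wk X s' n2)"
    have a1': "a - real s < \<beta> * real N + x" "\<beta> * real N - x < a - real s"
      using X unfolding U_def B1_def B2_def a_def by auto
    have b1': "bb - real s' < \<beta> * real n2 + x" "\<beta> * real n2 - x < bb - real s'"
      using X unfolding U_def B3_def B4_def bb_def by auto
    have c1: "\<bar>a - (real s + \<beta> * real N)\<bar> \<le> x" using a1' by auto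
    have c2: "\<bar>bb - (real s' + \<beta> * real n2)\<bar> \<le> x" using b1' by auto
    have "bb - a > (real s' - real s) - \<beta> * (real N - real n2) - 2 * x"
      using a1' b1' by (simp add: algebra_simps)
    also have "(real s' - real s) - \<beta> * (real N - real n2) - 2 * x = (1 - \<beta>) * real (s' - s) - 2 * x"
      unfolding Nn2 using ss by (simp add: algebra_simps of_nat_diff)
    finally have "bb - a > (1 - \<beta>) * real (s' - s) - 2 * x" .
    moreover have "x \<le> 4 * w * sqrt (real N)" unfolding x_def using sqb w by (intro mult_left_mono) auto
    ultimately have "bb - a > w * sqrt (real N)" using d wpos unfolding N_def by linarith
    then show "X \<in> G" using c1 c2 wpos X unfolding G_def a_def bb_def x_def N_def n2_def U_def by auto
  qed
  have "1 - 4 * exp (- (w^2)) \<le> 1 - P.prob U" using pU E4 by linarith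
  also have "\<dots> = P.prob (Sp - U)" unfolding Sp_def using P.prob_compl[OF sU] by simp
  also have "\<dots> \<le> P.prob G" by (rule P.finite_measure_mono[OF sub sG])
  finally show ?thesis unfolding G_def Sp_def .
qed

end


theorem mainTheorem6:
  fixes \<beta> :: real and \<omega> :: "nat \<Rightarrow> nat"
  assumes "0 < \<beta>" "\<beta> < 1"
    and "mono \<omega>"
    and "\<exists>c>0. (\<lambda>m. real (\<omega> m)) \<in> O(\<lambda>m. real m powr (1/2 - c))"
  shows "\<exists>C'>0. \<forall>\<alpha>::real. 0 < \<alpha> \<and> \<alpha> < 1 \<longrightarrow> (\<exists>C>0. \<forall>s s' t :: nat.
     s < s' \<and> real s' \<le> real t - C \<and>
     real (s' - s) > C' * real (\<omega> (t - s)) * sqrt (real (t - s)) \<longrightarrow>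
     measure (coin_space \<alpha> \<beta>)
       {X \<in> space (coin_space \<alpha> \<beta>).
          \<bar>real (frontier X (rumor_index X s) t) - (real s + \<beta> * real (t - s))\<bar>
             \<le> 4 * real (\<omega> (t - s)) * sqrt (\<beta> * real (t - s)) \<and>
          \<bar>real (frontier X (rumor_index X s') t) - (real s' + \<beta> * real (t - s'))\<bar>
             \<le> 4 * real (\<omega> (t - s)) * sqrt (\<beta> * real (t - s)) \<and>
          real (frontier X (rumor_index X s') t) - real (frontier X (rumor_index X s) t)
             > real (\<omega> (t - s)) * sqrt (real (t - s)) \<and>
          real (\<omega> (t - s)) * sqrt (real (t - s)) > 0}
     \<ge> 1 - 4 * exp (- (real (\<omega> (t - s)))\<^sup>2))"
proof -
  obtain c where c: "c > 0" "(\<lambda>m. real (\<omega> m)) \<in> O(\<lambda>m. real m powr (1/2 - c))"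
    using assms(4) by blast
  have "(\<lambda>m::nat. real m powr (1/2 - c)) \<in> o(\<lambda>m. real m powr (1/2))"
    using c(1) by (subst powr_smallo_iff) (auto simp: filterlim_real_sequentially)
  then have sm: "(\<lambda>m. real (\<omega> m)) \<in> o(\<lambda>m. real m powr (1/2))"
    by (rule landau_o.big_small_trans[OF c(2)])
  define C' where "C' = 10 / (1 - \<beta>)"
  have C'pos: "C' > 0" unfolding C'_def using assms(2) by simp
  show ?thesis
  proof (rule exI[of _ C'], intro conjI C'pos allI impI)
    fix \<alpha> :: real assume a: "0 < \<alpha> \<and> \<alpha> < 1"
    have ab: "0 \<le> \<alpha>" "\<alpha> \<le> 1" "0 \<le> \<beta>" "\<beta> \<le> 1" using a assms(1,2) by auto
    define lz where "lz = ln ((2 - \<alpha>) / (2 - 2 * \<alpha>))"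
    have rat: "1 < (2 - \<alpha>) / (2 - 2 * \<alpha>)" using a by (simp add: field_simps)
    have l0: "0 < lz" unfolding lz_def using rat by simp
    have el0: "exp lz = (2 - \<alpha>) / (2 - 2 * \<alpha>)" unfolding lz_def using rat by simp
    define \<epsilon> where "\<epsilon> = min 1 lz * sqrt \<beta> / 2"
    have eps: "0 < \<epsilon>" unfolding \<epsilon>_def using l0 assms(1) by simp
    have "eventually (\<lambda>m. norm (real (\<omega> m)) \<le> \<epsilon> * norm (real m powr (1/2))) sequentially"
      by (rule landau_o.smallD[OF sm eps])
    then obtain N0 where N0: "\<And>m. m \<ge> N0 \<Longrightarrow> real (\<omega> m) \<le> \<epsilon> * sqrt (real m)"
      unfolding eventually_sequentially by (auto simp: powr_half_sqrt)
    show "\<exists>C>0. \<forall>s s' t :: nat.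
     s < s' \<and> real s' \<le> real t - C \<and>
     real (s' - s) > C' * real (\<omega> (t - s)) * sqrt (real (t - s)) \<longrightarrow>
     measure (coin_space \<alpha> \<beta>)
       {X \<in> space (coin_space \<alpha> \<beta>).
          \<bar>real (frontier X (rumor_index X s) t) - (real s + \<beta> * real (t - s))\<bar>
             \<le> 4 * real (\<omega> (t - s)) * sqrt (\<beta> * real (t - s)) \<and>
          \<bar>real (frontier X (rumor_index X s') t) - (real s' + \<beta> * real (t - s'))\<bar>
             \<le> 4 * real (\<omega> (t - s)) * sqrt (\<beta> * real (t - s)) \<and>
          real (frontier X (rumor_index X s') t) - real (frontier X (rumor_index X s) t)
             > real (\<omega> (t - s)) * sqrt (real (t - s)) \<and>
          real (\<omega> (t - s)) * sqrt (real (t - s)) > 0}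
     \<ge> 1 - 4 * exp (- (real (\<omega> (t - s)))\<^sup>2)"
    proof -
    have inner: "\<forall>s s' t :: nat.
     s < s' \<and> real s' \<le> real t - (real N0 + 1) \<and>
     real (s' - s) > C' * real (\<omega> (t - s)) * sqrt (real (t - s)) \<longrightarrow>
     measure (coin_space \<alpha> \<beta>)
       {X \<in> space (coin_space \<alpha> \<beta>).
          \<bar>real (frontier X (rumor_index X s) t) - (real s + \<beta> * real (t - s))\<bar>
             \<le> 4 * real (\<omega> (t - s)) * sqrt (\<beta> * real (t - s)) \<and>
          \<bar>real (frontier X (rumor_index X s') t) - (real s' + \<beta> * real (t - s'))\<bar>
             \<le> 4 * real (\<omega> (t - s)) * sqrt (\<beta> * real (t - s)) \<and>
          real (frontier X (rumor_index X s') t) - real (frontier X (rumor_index X s) t)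
             > real (\<omega> (t - s)) * sqrt (real (t - s)) \<and>
          real (\<omega> (t - s)) * sqrt (real (t - s)) > 0}
     \<ge> 1 - 4 * exp (- (real (\<omega> (t - s)))\<^sup>2)"
    proof (intro allI impI)
      fix s s' t :: nat
      assume h: "s < s' \<and> real s' \<le> real t - (real N0 + 1) \<and>
        real (s' - s) > C' * real (\<omega> (t - s)) * sqrt (real (t - s))"
      have ss: "s < s'" "s' \<le> t" using h by auto
      have NN0: "N0 \<le> t - s" using h by linarith
      define w where "w = real (\<omega> (t - s))"
      let ?G = "{X \<in> space (coin_space \<alpha> \<beta>).
          \<bar>real (frontier X (rumor_index X s) t) - (real s + \<beta> * real (t - s))\<bar>
             \<le> 4 * real (\<omega> (t - s)) * sqrt (\<beta> * real (t - s)) \<and>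
          \<bar>real (frontier X (rumor_index X s') t) - (real s' + \<beta> * real (t - s'))\<bar>
             \<le> 4 * real (\<omega> (t - s)) * sqrt (\<beta> * real (t - s)) \<and>
          real (frontier X (rumor_index X s') t) - real (frontier X (rumor_index X s) t)
             > real (\<omega> (t - s)) * sqrt (real (t - s)) \<and>
          real (\<omega> (t - s)) * sqrt (real (t - s)) > 0}"
      show "measure (coin_space \<alpha> \<beta>) ?G \<ge> 1 - 4 * exp (- (real (\<omega> (t - s)))\<^sup>2)"
      proof (cases "\<omega> (t - s) = 0")
        case True
        then have e: "1 - 4 * exp (- (real (\<omega> (t - s)))\<^sup>2) = -3" by simp
        show ?thesis unfolding e using measure_nonneg[of "coin_space \<alpha> \<beta>" ?G] by linarith
      next
        case False
        then have w1: "1 \<le> w" unfolding w_def by simp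
        have Npos: "0 < real (t - s)" using ss by simp
        have wle: "w \<le> \<epsilon> * sqrt (real (t - s))" unfolding w_def by (rule N0[OF NN0])
        have sqbN: "sqrt (\<beta> * real (t - s)) = sqrt \<beta> * sqrt (real (t - s))" by (simp add: real_sqrt_mult)
        have lle: "2 * w / sqrt (\<beta> * real (t-s)) \<le> min 1 lz"
        proof -
          have pos: "0 < sqrt \<beta> * sqrt (real (t - s))" using assms(1) Npos by simp
          have "2 * w \<le> 2 * (\<epsilon> * sqrt (real (t - s)))" using wle by simp
          also have "\<dots> = min 1 lz * (sqrt \<beta> * sqrt (real (t - s)))" unfolding \<epsilon>_def by simp
          finally have "2 * w \<le> min 1 lz * (sqrt \<beta> * sqrt (real (t - s)))" .
          then show ?thesis unfolding sqbN using pos by (simp only: pos_divide_le_eq[OF pos])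
        qed
        have l1: "2 * w / sqrt (\<beta> * real (t-s)) \<le> 1" using lle by simp
        have l2: "exp (2 * w / sqrt (\<beta> * real (t-s))) \<le> (2 - \<alpha>) / (2 - 2 * \<alpha>)"
          unfolding el0[symmetric] using lle by simp
        have d: "10 * w * sqrt (real (t - s)) < (1 - \<beta>) * real (s' - s)"
        proof -
          have "C' * w * sqrt (real (t - s)) < real (s' - s)" using h unfolding w_def by blast
          then have "(1 - \<beta>) * (C' * w * sqrt (real (t - s))) < (1 - \<beta>) * real (s' - s)"
            using assms(2) by (intro mult_strict_left_mono) auto
          moreover have "(1 - \<beta>) * (C' * w * sqrt (real (t - s))) = 10 * w * sqrt (real (t - s))"
            unfolding C'_def using assms(2) by simp
          ultimately show ?thesis by simp
        qed
        have K: "1 - 4 * exp (- (w^2)) \<le> measure (PiM UNIV (Pm \<alpha> \<beta>)) {X \<in> space (PiM UNIV (Pm \<alpha> \<beta>)).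
           \<bar>real (wk X s (t-s)) - (real s + \<beta> * real (t-s))\<bar> \<le> 4 * w * sqrt (\<beta> * real (t-s)) \<and>
           \<bar>real (wk X s' (t-s')) - (real s' + \<beta> * real (t-s'))\<bar> \<le> 4 * w * sqrt (\<beta> * real (t-s)) \<and>
           real (wk X s' (t-s')) - real (wk X s (t-s)) > w * sqrt (real (t-s)) \<and>
           w * sqrt (real (t-s)) > 0}"
          by (rule key[OF ab _ assms(1) ss w1 d l1 l2]) (use a in simp)
        have fs: "frontier X (rumor_index X s) t = wk X s (t - s)" for X using frontier_wk ss by simp
        have fs': "frontier X (rumor_index X s') t = wk X s' (t - s')" for X using frontier_wk ss by simp
        show ?thesis using K unfolding coin_space_eq fs fs' w_def .
      qed
    qed
    show ?thesis by (rule exI[of _ "real N0 + 1"]) (use inner in simp)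
    qed
  qed
qed


end
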